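(* Suppose $(C,\mathbf A)$ (state space $\mathcal X$) and $(\widetilde C,\widetilde{\mathbf A})$ (state space $\widetilde{\mathcal X}$), with common output space $\mathcal Y$, are two output-stable, observable pairs realizing the same formal kernel: $$C(I-Z(z)A)^{-1}(I-A^*Z(w)^* )^{-1}C^*=\widetilde C(I-Z(z)\widetilde A)^{-1}(I-\widetilde A^*Z(w)^* )^{-1}\widetilde C^*.$$ Then $(C,\mathbf A)$ and $(\widetilde C,\widetilde{\mathbf A})$ are unitarily equivalent: there is a unitary $U\colon\mathcal X\to\widetilde{\mathcal X}$ with $C=\widetilde CU$ and $A_j=U^{-1}\widetilde A_jU$ for $j=1,\dots,d$.
   Context: $\mathcal F_d$: free semigroup of words on $\{1,\dots,d\}$; for $v=i_N\cdots i_1$: $v^\top=i_1\cdots i_N$, $\mathbf A^v=A_{i_N}\cdots A_{i_1}$, $z^v=z_{i_N}\cdots z_{i_1}$. The kernel $C(I-Z(z)A)^{-1}(I-A^*Z(w)^* )^{-1}C^*$ denotes the formal series $\sum_{\alpha,\beta\in\mathcal F_d}C\mathbf A^\alpha(\mathbf A^\beta)^*C^*\,z^\alpha w^{\beta^\top}$ in two sets $z,w$ of noncommuting indeterminates; equality of kernels means equality of all coefficients. $(C,\mathbf A)$ is output-stable if $x\mapsto\{C\mathbf A^vx\}_v$ is bounded from $\mathcal X$ into $\ell^2_{\mathcal Y}(\mathcal F_d)$, and observable if $C\mathbf A^vx=0$ for all $v\in\mathcal F_d$ implies $x=0$. *)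

theory Defs
  imports "HOL-Analysis.Analysis"
begin

class complex_vector = real_vector +
  fixes scaleC :: "complex \<Rightarrow> 'a \<Rightarrow> 'a"
  assumes scaleC_add_right: "scaleC c (x + y) = scaleC c x + scaleC c y"
    and scaleC_add_left: "scaleC (b + c) x = scaleC b x + scaleC c x"
    and scaleC_scaleC: "scaleC b (scaleC c x) = scaleC (b * c) x"
    and scaleC_one: "scaleC 1 x = x"
    and scaleR_scaleC: "scaleR r x = scaleC (complex_of_real r) x"

class complex_inner = complex_vector + real_normed_vector +
  fixes cinner :: "'a \<Rightarrow> 'a \<Rightarrow> complex"
  assumes cinner_add_left: "cinner (x + y) z = cinner x z + cinner y z"
    and cinner_scaleC_left: "cinner (scaleC c x) y = cnj c * cinner x y"
    and cinner_commute: "cinner x y = cnj (cinner y x)"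
    and cinner_ge_zero: "Im (cinner x x) = 0 \<and> Re (cinner x x) \<ge> 0"
    and cinner_eq_zero_iff: "cinner x x = 0 \<longleftrightarrow> x = 0"
    and norm_eq_sqrt_cinner: "norm x = sqrt (Re (cinner x x))"

class chilbert_space = complex_inner + complete_space

definition clinear :: "('a::complex_vector \<Rightarrow> 'b::complex_vector) \<Rightarrow> bool" where
  "clinear f \<longleftrightarrow> (\<forall>x y. f (x + y) = f x + f y) \<and> (\<forall>c x. f (scaleC c x) = scaleC c (f x))"

definition bounded_clinear :: "('a::complex_inner \<Rightarrow> 'b::complex_inner) \<Rightarrow> bool" where
  "bounded_clinear f \<longleftrightarrow> clinear f \<and> (\<exists>K. \<forall>x. norm (f x) \<le> norm x * K)"

text \<open>Hilbert space adjoint (exists and is unique for bounded operators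
  between Hilbert spaces).\<close>
definition cadjoint :: "('a::complex_inner \<Rightarrow> 'b::complex_inner) \<Rightarrow> 'b \<Rightarrow> 'a" where
  "cadjoint f = (SOME g. \<forall>x y. cinner (f x) y = cinner x (g y))"

definition unitary :: "('a::complex_inner \<Rightarrow> 'b::complex_inner) \<Rightarrow> bool" where
  "unitary U \<longleftrightarrow> bounded_clinear U \<and> bij U \<and> (\<forall>x y. cinner (U x) (U y) = cinner x y)"

text \<open>A word v = i_N ... i_1 is the list [i_N, ..., i_1] with letters in {1..d}
  (the empty list is the empty word).\<close>
definition words :: "nat \<Rightarrow> nat list set" where
  "words d = {v. set v \<subseteq> {1..d}}"

definition wpow :: "(nat \<Rightarrow> 'x \<Rightarrow> 'x) \<Rightarrow> nat list \<Rightarrow> 'x \<Rightarrow> 'x" where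
  "wpow A v = foldr (\<lambda>i f. A i \<circ> f) v id"

definition output_stable :: "nat \<Rightarrow> ('x::complex_inner \<Rightarrow> 'y::complex_inner) \<Rightarrow> (nat \<Rightarrow> 'x \<Rightarrow> 'x) \<Rightarrow> bool" where
  "output_stable d C A \<longleftrightarrow> (\<exists>M. \<forall>x.
     (\<lambda>v. (norm (C (wpow A v x)))\<^sup>2) summable_on words d \<and>
     (\<Sum>\<^sub>\<infinity>v\<in>words d. (norm (C (wpow A v x)))\<^sup>2) \<le> M * (norm x)\<^sup>2)"

definition observable :: "nat \<Rightarrow> ('x::complex_inner \<Rightarrow> 'y::complex_inner) \<Rightarrow> (nat \<Rightarrow> 'x \<Rightarrow> 'x) \<Rightarrow> bool" where
  "observable d C A \<longleftrightarrow> (\<forall>x. (\<forall>v\<in>words d. C (wpow A v x) = 0) \<longrightarrow> x = 0)"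

text \<open>Coefficient of z^\<alpha> w^{\<beta>^T} in C(I-Z(z)A)^{-1}(I-A^*Z(w)^*)^{-1}C^*.\<close>
definition kernel_coeff :: "('x::complex_inner \<Rightarrow> 'y::complex_inner) \<Rightarrow> (nat \<Rightarrow> 'x \<Rightarrow> 'x) \<Rightarrow> nat list \<Rightarrow> nat list \<Rightarrow> 'y \<Rightarrow> 'y" where
  "kernel_coeff C A \<alpha> \<beta> = C \<circ> wpow A \<alpha> \<circ> cadjoint (wpow A \<beta>) \<circ> cadjoint C"

end

theory Submission
  imports Defs
begin

lemma scaleC_zero_right[simp]: "scaleC c (0::'a::complex_vector) = 0"
proof -
  have "scaleC c (0::'a) = scaleC c (0 + 0)" by simp
  also have "\<dots> = scaleC c 0 + scaleC c 0" by (rule scaleC_add_right)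
  finally show ?thesis by simp
qed
lemma scaleC_zero_left[simp]: "scaleC 0 (x::'a::complex_vector) = 0"
proof -
  have "scaleC 0 x = scaleC (0 + 0) x" by simp
  also have "\<dots> = scaleC 0 x + scaleC 0 x" by (rule scaleC_add_left)
  finally show ?thesis by simp
qed
lemma scaleC_minus_right: "scaleC c (- x::'a::complex_vector) = - scaleC c x"
proof -
  have "scaleC c x + scaleC c (- x) = scaleC c (x + - x)" by (rule scaleC_add_right[symmetric])
  also have "\<dots> = 0" by simp
  finally show ?thesis by (simp add: add_eq_0_iff)
qed
lemma scaleC_diff_right: "scaleC c (x - y::'a::complex_vector) = scaleC c x - scaleC c y"
  by (simp only: diff_conv_add_uminus scaleC_add_right scaleC_minus_right)
lemma scaleC_minus1: "scaleC (-1) (x::'a::complex_vector) = - x"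
proof -
  have "x + scaleC (-1) x = scaleC 1 x + scaleC (-1) x" by (simp only: scaleC_one)
  also have "\<dots> = scaleC (1 + -1) x" by (rule scaleC_add_left[symmetric])
  also have "\<dots> = 0" by simp
  finally show ?thesis by (simp add: add_eq_0_iff)
qed

lemma cinner_zero_left[simp]: "cinner 0 (y::'a::complex_inner) = 0"
proof -
  have "cinner (0::'a) y = cinner (0 + 0) y" by simp
  also have "\<dots> = cinner 0 y + cinner 0 y" by (rule cinner_add_left)
  finally show ?thesis by simp
qed
lemma cinner_minus_left: "cinner (- x) (y::'a::complex_inner) = - cinner x y"
proof -
  have "cinner x y + cinner (- x) y = cinner (x + - x) y" by (rule cinner_add_left[symmetric])
  also have "\<dots> = 0" by simp
  finally show ?thesis by (simp add: add_eq_0_iff)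
qed
lemma cinner_diff_left: "cinner (x - z) (y::'a::complex_inner) = cinner x y - cinner z y"
  by (simp only: cinner_add_left cinner_minus_left diff_conv_add_uminus)
lemma cinner_add_right: "cinner y (x + z::'a::complex_inner) = cinner y x + cinner y z"
  by (subst (1 2 3) cinner_commute) (simp add: cinner_add_left)
lemma cinner_scaleC_right: "cinner y (scaleC c x::'a::complex_inner) = c * cinner y x"
  by (subst (1 2) cinner_commute) (simp add: cinner_scaleC_left)
lemma cinner_zero_right[simp]: "cinner (y::'a::complex_inner) 0 = 0"
  by (subst cinner_commute) simp
lemma cinner_minus_right: "cinner y (- x::'a::complex_inner) = - cinner y x"
  by (subst (1 2) cinner_commute) (simp add: cinner_minus_left)
lemma cinner_diff_right: "cinner y (x - z::'a::complex_inner) = cinner y x - cinner y z"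
  by (simp only: cinner_add_right cinner_minus_right diff_conv_add_uminus)

lemma cinner_self: "cinner x (x::'a::complex_inner) = complex_of_real ((norm x)\<^sup>2)"
proof -
  have 1: "Im (cinner x x) = 0" using cinner_ge_zero by blast
  have 2: "Re (cinner x x) \<ge> 0" using cinner_ge_zero by blast
  have 3: "(norm x)\<^sup>2 = Re (cinner x x)"
    using 2 norm_eq_sqrt_cinner[of x] real_sqrt_pow2 by metis
  show ?thesis apply (rule complex_eqI) using 1 3 by simp_all
qed

lemma norm_sq_Re: "(norm (x::'a::complex_inner))\<^sup>2 = Re (cinner x x)"
  by (simp add: cinner_self)

lemma cinner_eq0: "(\<forall>x. cinner x a = cinner x (b::'a::complex_inner)) \<Longrightarrow> a = b"
proof -
  assume h: "\<forall>x. cinner x a = cinner x b"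
  have "cinner (a - b) (a - b) = 0" using h by (simp add: cinner_diff_right)
  then show "a = b" by (simp add: cinner_eq_zero_iff)
qed

lemma proj_identity:
  fixes x y :: "'a::complex_inner"
  assumes "y \<noteq> 0"
  shows "(norm (x - scaleC (cinner y x / complex_of_real ((norm y)\<^sup>2)) y))\<^sup>2
     = (norm x)\<^sup>2 - (cmod (cinner y x))\<^sup>2 / (norm y)\<^sup>2"
proof -
  define n where "n = (norm y)\<^sup>2"
  define a where "a = cinner y x"
  have n: "n > 0" using assms by (simp add: n_def)
  define c where "c = a / complex_of_real n"
  have aux: "complex_of_real (cmod a) * complex_of_real (cmod a) = a * cnj a"
    by (metis complex_norm_square of_real_power power2_eq_square)
  have "complex_of_real ((norm (x - scaleC c y))\<^sup>2) = cinner (x - scaleC c y) (x - scaleC c y)"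
    by (simp add: cinner_self)
  also have "\<dots> = cinner x x - c * cinner x y - cnj c * cinner y x + cnj c * c * cinner y y"
    by (simp add: cinner_diff_left cinner_diff_right cinner_scaleC_left cinner_scaleC_right algebra_simps)
  also have "\<dots> = complex_of_real ((norm x)\<^sup>2) - c * cnj a - cnj c * a + cnj c * c * n"
    by (simp add: cinner_self a_def n_def cinner_commute[of x y])
  also have "\<dots> = complex_of_real ((norm x)\<^sup>2 - (cmod a)\<^sup>2 / n)"
    using n aux by (simp add: c_def field_simps complex_norm_square power2_eq_square)
  finally show ?thesis unfolding c_def a_def n_def using of_real_eq_iff by blast
qed

lemma cauchy_schwarz: "cmod (cinner y (x::'a::complex_inner)) \<le> norm y * norm x"
proof (cases "y = 0")
  case True then show ?thesis by simp
next
  case False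
  have "0 \<le> (norm x)\<^sup>2 - (cmod (cinner y x))\<^sup>2 / (norm y)\<^sup>2"
    using proj_identity[OF False, of x] by (metis zero_le_power2)
  then have "(cmod (cinner y x))\<^sup>2 \<le> (norm y * norm x)\<^sup>2"
    using False by (simp add: field_simps power_mult_distrib)
  then show ?thesis by (meson norm_ge_zero mult_nonneg_nonneg power2_le_imp_le)
qed

lemma norm_scaleC: "norm (scaleC c (x::'a::complex_inner)) = cmod c * norm x"
proof -
  have "cinner (scaleC c x) (scaleC c x) = cnj c * (c * cinner x x)"
    by (simp add: cinner_scaleC_left cinner_scaleC_right mult.left_commute)
  also have "\<dots> = (cnj c * c) * complex_of_real ((norm x)\<^sup>2)"
    by (simp only: cinner_self mult.assoc)
  also have "\<dots> = complex_of_real ((cmod c * norm x)\<^sup>2)"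
    by (metis complex_norm_square mult.commute of_real_mult power_mult_distrib)
  finally have "(norm (scaleC c x))\<^sup>2 = (cmod c * norm x)\<^sup>2" 
    by (metis cinner_self of_real_eq_iff)
  then show ?thesis by (simp add: power2_eq_iff_nonneg)
qed


lemma clinear_zero: "clinear T \<Longrightarrow> T 0 = 0"
  unfolding clinear_def by (metis scaleC_zero_left)
lemma clinear_add: "clinear T \<Longrightarrow> T (x + y) = T x + T y"
  unfolding clinear_def by blast
lemma clinear_scaleC: "clinear T \<Longrightarrow> T (scaleC c x) = scaleC c (T x)"
  unfolding clinear_def by blast
lemma clinear_minus: "clinear T \<Longrightarrow> T (- x) = - T x"
  by (metis clinear_scaleC scaleC_minus1)
lemma clinear_diff: "clinear T \<Longrightarrow> T (x - y) = T x - T y"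
  by (simp only: diff_conv_add_uminus clinear_add clinear_minus)

lemma bounded_clinear_linear: "bounded_clinear T \<Longrightarrow> bounded_linear T"
proof -
  assume h: "bounded_clinear T"
  then have l: "clinear T" and "\<exists>K. \<forall>x. norm (T x) \<le> norm x * K" unfolding bounded_clinear_def by auto
  then obtain K where K: "\<forall>x. norm (T x) \<le> norm x * K" by blast
  show ?thesis
  proof (rule bounded_linear_intro[of T K])
    show "T (x + y) = T x + T y" for x y using l by (rule clinear_add)
    show "T (scaleR r x) = scaleR r (T x)" for r x using l by (simp add: scaleR_scaleC clinear_scaleC)
    show "norm (T x) \<le> norm x * K" for x using K by blast
  qed
qed

lemma bounded_clinear_clinear: "bounded_clinear T \<Longrightarrow> clinear T"
  unfolding bounded_clinear_def by blast

lemma bounded_linear_cinner_right: "bounded_linear (cinner (z::'a::complex_inner))"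
proof (rule bounded_linear_intro[of _ "norm z"])
  show "cinner z (x + y) = cinner z x + cinner z y" for x y by (rule cinner_add_right)
  show "cinner z (scaleR r x) = scaleR r (cinner z x)" for r x
    by (simp add: scaleR_scaleC cinner_scaleC_right scaleR_conv_of_real)
  show "norm (cinner z x) \<le> norm x * norm z" for x
    using cauchy_schwarz[of z x] by (simp add: mult.commute)
qed

lemma bounded_linear_cinner_left: "bounded_linear (\<lambda>x. cinner x (z::'a::complex_inner))"
proof (rule bounded_linear_intro[of _ "norm z"])
  show "cinner (x + y) z = cinner x z + cinner y z" for x y by (rule cinner_add_left)
  show "cinner (scaleR r x) z = scaleR r (cinner x z)" for r x
    by (simp add: scaleR_scaleC cinner_scaleC_left scaleR_conv_of_real)
  show "norm (cinner x z) \<le> norm x * norm z" for x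
    using cauchy_schwarz[of x z] by simp
qed

lemma bounded_linear_scaleC: "bounded_linear (scaleC c :: 'a::complex_inner \<Rightarrow> 'a)"
proof (rule bounded_linear_intro[of _ "cmod c"])
  show "scaleC c (x + y) = scaleC c x + scaleC c (y::'a)" for x y by (rule scaleC_add_right)
  show "scaleC c (scaleR r x) = scaleR r (scaleC c (x::'a))" for r x
    by (simp add: scaleR_scaleC scaleC_scaleC mult.commute)
  show "norm (scaleC c (x::'a)) \<le> norm x * cmod c" for x
    by (simp add: norm_scaleC mult.commute)
qed

lemma parallelogram: "(norm (a + b::'a::complex_inner))\<^sup>2 + (norm (a - b))\<^sup>2 = 2 * (norm a)\<^sup>2 + 2 * (norm b)\<^sup>2"
  by (simp add: norm_sq_Re cinner_add_left cinner_add_right cinner_diff_left cinner_diff_right)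

definition csubspace :: "'a::complex_vector set \<Rightarrow> bool" where
  "csubspace M \<longleftrightarrow> 0 \<in> M \<and> (\<forall>x\<in>M. \<forall>y\<in>M. x + y \<in> M) \<and> (\<forall>c. \<forall>x\<in>M. scaleC c x \<in> M)"

lemma projection:
  fixes M :: "'a::chilbert_space set" and x :: 'a
  assumes cl: "closed M" and sub: "csubspace M"
  shows "\<exists>m\<in>M. \<forall>k\<in>M. cinner k (x - m) = 0"
proof -
  have M0: "0 \<in> M" and Madd: "\<And>a b. a \<in> M \<Longrightarrow> b \<in> M \<Longrightarrow> a + b \<in> M"
    and Msc: "\<And>c a. a \<in> M \<Longrightarrow> scaleC c a \<in> M" using sub unfolding csubspace_def by auto
  define D where "D = (\<lambda>k. (norm (x - k))\<^sup>2)"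
  define \<delta> where "\<delta> = Inf (D ` M)"
  have bdd: "bdd_below (D ` M)" unfolding D_def by (rule bdd_belowI[of _ 0]) auto
  have low: "\<delta> \<le> D k" if "k \<in> M" for k unfolding \<delta>_def using bdd that by (simp add: cInf_lower)
  have "\<exists>k\<in>M. D k < \<delta> + inverse (real (Suc n))" for n
  proof -
    have "Inf (D ` M) < \<delta> + inverse (real (Suc n))" unfolding \<delta>_def by simp
    then obtain t where "t \<in> D ` M" "t < \<delta> + inverse (real (Suc n))"
      using cInf_lessD[of "D ` M"] M0 by blast
    then show ?thesis by blast
  qed
  then obtain k where kM: "\<And>n. k n \<in> M" and kD: "\<And>n. D (k n) < \<delta> + inverse (real (Suc n))"
    by metis
  have mid: "(norm (k n - k m))\<^sup>2 \<le> 2 * inverse (real (Suc n)) + 2 * inverse (real (Suc m))" for n m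
  proof -
    define h where "h = scaleR (1/2) (k n + k m)"
    have hM: "h \<in> M" unfolding h_def scaleR_scaleC using kM Madd Msc by blast
    have "(x - k n) + (x - k m) = scaleR 2 (x - h)" unfolding h_def by (simp add: algebra_simps scaleR_2)
    then have "(norm ((x - k n) + (x - k m)))\<^sup>2 = 4 * D h" unfolding D_def
      by (simp add: power_mult_distrib)
    moreover have "(x - k n) - (x - k m) = k m - k n" by simp
    moreover have "norm (k m - k n) = norm (k n - k m)" by (rule norm_minus_commute)
    ultimately have "(norm (k n - k m))\<^sup>2 = 2 * D (k n) + 2 * D (k m) - 4 * D h"
      using parallelogram[of "x - k n" "x - k m"] unfolding D_def by simp
    then show ?thesis using kD[of n] kD[of m] low[OF hM] by simp
  qed
  have "Cauchy k"
  proof (rule metric_CauchyI)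
    fix e :: real assume e: "e > 0"
    obtain N where N: "inverse (real (Suc N)) < e\<^sup>2 / 4"
      using e reals_Archimedean by (metis divide_pos_pos zero_less_numeral zero_less_power)
    show "\<exists>M. \<forall>m\<ge>M. \<forall>n\<ge>M. dist (k m) (k n) < e"
    proof (intro exI allI impI)
      fix m n assume mN: "m \<ge> N" and nN: "n \<ge> N"
      have a: "inverse (real (Suc m)) \<le> inverse (real (Suc N))" using mN by (simp add: field_simps)
      have b: "inverse (real (Suc n)) \<le> inverse (real (Suc N))" using nN by (simp add: field_simps)
      have "(dist (k m) (k n))\<^sup>2 \<le> 2 * inverse (real (Suc m)) + 2 * inverse (real (Suc n))"
        using mid[of m n] by (simp only: dist_norm)
      then have "(dist (k m) (k n))\<^sup>2 < e\<^sup>2" using a b N by linarith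
      then show "dist (k m) (k n) < e" using e by (simp add: power_less_imp_less_base)
    qed
  qed
  then obtain m where km: "k \<longlonglongrightarrow> m" using Cauchy_convergent convergent_def by blast
  have mM: "m \<in> M" using closed_sequentially[OF cl] kM km by blast
  have "(\<lambda>n. D (k n)) \<longlonglongrightarrow> D m" unfolding D_def
    by (intro tendsto_intros km)
  moreover have "(\<lambda>n. \<delta> + inverse (real (Suc n))) \<longlonglongrightarrow> \<delta> + 0"
    by (intro tendsto_intros LIMSEQ_inverse_real_of_nat)
  ultimately have "D m \<le> \<delta> + 0" using kD by (intro LIMSEQ_le) (auto intro: less_imp_le)
  then have minim: "D m \<le> D k'" if "k' \<in> M" for k' using low[OF that] by simp
  show ?thesis
  proof (intro bexI[OF _ mM] ballI)
    fix k' assume k'M: "k' \<in> M"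
    show "cinner k' (x - m) = 0"
    proof (cases "k' = 0")
      case True then show ?thesis by simp
    next
      case False
      define c where "c = cinner k' (x - m) / complex_of_real ((norm k')\<^sup>2)"
      have "m + scaleC c k' \<in> M" using Madd Msc mM k'M by blast
      then have "D m \<le> D (m + scaleC c k')" by (rule minim)
      also have "D (m + scaleC c k') = (norm ((x - m) - scaleC c k'))\<^sup>2" unfolding D_def
        by (simp add: algebra_simps)
      also have "\<dots> = D m - (cmod (cinner k' (x - m)))\<^sup>2 / (norm k')\<^sup>2"
        unfolding c_def D_def by (rule proj_identity[OF False])
      finally have "(cmod (cinner k' (x - m)))\<^sup>2 / (norm k')\<^sup>2 \<le> 0" by simp
      then have "(cmod (cinner k' (x - m)))\<^sup>2 \<le> 0" using False
        by (simp add: divide_le_0_iff)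
      then show ?thesis by simp
    qed
  qed
qed


lemma riesz:
  fixes f :: "'a::chilbert_space \<Rightarrow> complex"
  assumes bl: "bounded_linear f" and sc: "\<And>c x. f (scaleC c x) = c * f x"
  shows "\<exists>z. \<forall>x. f x = cinner z x"
proof (cases "\<forall>x. f x = 0")
  case True then show ?thesis by (intro exI[of _ 0]) simp
next
  case False
  then obtain x0 where x0: "f x0 \<noteq> 0" by blast
  define K where "K = {x. f x = 0}"
  have "closed K" unfolding K_def
    by (intro closed_Collect_eq linear_continuous_on bl continuous_on_const)
  moreover have "csubspace K" unfolding K_def csubspace_def
    using linear_add[OF bounded_linear.linear[OF bl]] sc linear_0[OF bounded_linear.linear[OF bl]] by auto
  ultimately obtain m where mK: "m \<in> K" and orth: "\<forall>k\<in>K. cinner k (x0 - m) = 0"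
    using projection by blast
  define u where "u = x0 - m"
  have fu: "f u = f x0" using mK unfolding u_def K_def by (simp add: linear_diff[OF bounded_linear.linear[OF bl]])
  then have u0: "u \<noteq> 0" using x0 linear_0[OF bounded_linear.linear[OF bl]] by auto
  define n where "n = (norm u)\<^sup>2"
  have n0: "n \<noteq> 0" using u0 by (simp add: n_def)
  show ?thesis
  proof (intro exI[of _ "scaleC (cnj (f u) / complex_of_real n) u"] allI)
    fix x
    define w where "w = x - scaleC (f x / f u) u"
    have "f w = 0" unfolding w_def using x0 fu by (simp add: linear_diff[OF bounded_linear.linear[OF bl]] sc)
    then have "cinner w u = 0" using orth unfolding K_def u_def by blast
    then have "cinner u w = 0" by (subst cinner_commute) simp
    then have "cinner u x = (f x / f u) * complex_of_real n"
      unfolding w_def n_def by (simp add: cinner_diff_right cinner_scaleC_right cinner_self)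
    then show "f x = cinner (scaleC (cnj (f u) / complex_of_real n) u) x"
      using x0 fu n0 by (simp add: cinner_scaleC_left field_simps)
  qed
qed

lemma adjoint_exists:
  fixes T :: "'a::chilbert_space \<Rightarrow> 'b::complex_inner"
  assumes "bounded_clinear T"
  shows "\<exists>g. \<forall>x y. cinner (T x) y = cinner x (g y)"
proof -
  have "\<exists>z. \<forall>x. cinner (T x) y = cinner x z" for y
  proof -
    have "bounded_linear (\<lambda>x. cinner y (T x))"
      using bounded_linear_compose[OF bounded_linear_cinner_right bounded_clinear_linear[OF assms]] .
    moreover have "cinner y (T (scaleC c x)) = c * cinner y (T x)" for c x
      using bounded_clinear_clinear[OF assms] by (simp add: clinear_scaleC cinner_scaleC_right)
    ultimately obtain z where z: "\<forall>x. cinner y (T x) = cinner z x" using riesz by blast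
    show ?thesis
    proof (intro exI allI)
      fix x show "cinner (T x) y = cinner x z" using z by (metis cinner_commute)
    qed
  qed
  then show ?thesis by metis
qed

lemma cadjoint:
  fixes T :: "'a::chilbert_space \<Rightarrow> 'b::complex_inner"
  assumes "bounded_clinear T"
  shows "cinner (T x) y = cinner x (cadjoint T y)"
proof -
  have "\<forall>x y. cinner (T x) y = cinner x (cadjoint T y)"
    unfolding cadjoint_def using someI_ex[OF adjoint_exists[OF assms]] .
  then show ?thesis by blast
qed

lemma cadjoint_left:
  fixes T :: "'a::chilbert_space \<Rightarrow> 'b::complex_inner"
  assumes "bounded_clinear T"
  shows "cinner (cadjoint T y) x = cinner y (T x)"
proof -
  have "cinner (cadjoint T y) x = cnj (cinner x (cadjoint T y))" by (rule cinner_commute)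
  also have "\<dots> = cnj (cinner (T x) y)" using cadjoint[OF assms, of x y] by simp
  also have "\<dots> = cinner y (T x)" by (rule cinner_commute[symmetric])
  finally show ?thesis .
qed

lemma closure_csubspace:
  fixes S :: "'a::complex_inner set"
  assumes "csubspace S"
  shows "csubspace (closure S)"
proof -
  have S: "0 \<in> S" "\<And>a b. a \<in> S \<Longrightarrow> b \<in> S \<Longrightarrow> a + b \<in> S" "\<And>c a. a \<in> S \<Longrightarrow> scaleC c a \<in> S"
    using assms unfolding csubspace_def by auto
  have "a + b \<in> closure S" if "a \<in> closure S" "b \<in> closure S" for a b
  proof -
    have "\<exists>f. (\<forall>n. f n \<in> S) \<and> f \<longlonglongrightarrow> a" using that(1) by (simp only: closure_sequential)
    then obtain f where f: "\<forall>n. f n \<in> S" "f \<longlonglongrightarrow> a" by blast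
    have "\<exists>g. (\<forall>n. g n \<in> S) \<and> g \<longlonglongrightarrow> b" using that(2) by (simp only: closure_sequential)
    then obtain g where g: "\<forall>n. g n \<in> S" "g \<longlonglongrightarrow> b" by blast
    have "(\<lambda>n. f n + g n) \<longlonglongrightarrow> a + b" using f g by (intro tendsto_add) auto
    then show ?thesis unfolding closure_sequential using f g S(2) by (intro exI[of _ "\<lambda>n. f n + g n"]) auto
  qed
  moreover have "scaleC c a \<in> closure S" if "a \<in> closure S" for a c
  proof -
    have "\<exists>f. (\<forall>n. f n \<in> S) \<and> f \<longlonglongrightarrow> a" using that(1) by (simp only: closure_sequential)
    then obtain f where f: "\<forall>n. f n \<in> S" "f \<longlonglongrightarrow> a" by blast
    have "(\<lambda>n. scaleC c (f n)) \<longlonglongrightarrow> scaleC c a"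
      using bounded_linear.tendsto[OF bounded_linear_scaleC f(2)] .
    then show ?thesis unfolding closure_sequential using f S(3) by (intro exI[of _ "\<lambda>n. scaleC c (f n)"]) auto
  qed
  moreover have "0 \<in> closure S" using S(1) closure_subset by blast
  ultimately show ?thesis unfolding csubspace_def by blast
qed


lemma bounded_clinear_id: "bounded_clinear (id :: 'a::complex_inner \<Rightarrow> 'a)"
  unfolding bounded_clinear_def clinear_def by (intro conjI exI[of _ 1]) auto

lemma bounded_clinear_compose:
  assumes f: "bounded_clinear f" and g: "bounded_clinear g"
  shows "bounded_clinear (f \<circ> g)"
proof -
  obtain K1 where K1: "\<forall>x. norm (f x) \<le> norm x * K1" using f unfolding bounded_clinear_def by blast
  obtain K2 where K2: "\<forall>x. norm (g x) \<le> norm x * K2" using g unfolding bounded_clinear_def by blast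
  have "norm (f (g x)) \<le> norm x * (max K2 0 * max K1 0)" for x
  proof -
    have "norm (f (g x)) \<le> norm (g x) * max K1 0"
      using K1 by (meson max.cobounded1 mult_left_mono norm_ge_zero order_trans)
    also have "norm (g x) \<le> norm x * max K2 0"
      using K2 by (meson max.cobounded1 mult_left_mono norm_ge_zero order_trans)
    then have "norm (g x) * max K1 0 \<le> norm x * max K2 0 * max K1 0"
      by (simp add: mult_right_mono)
    finally show ?thesis by (simp add: mult.assoc)
  qed
  moreover have "clinear (f \<circ> g)"
    using bounded_clinear_clinear[OF f] bounded_clinear_clinear[OF g]
    unfolding clinear_def by simp
  ultimately show ?thesis unfolding bounded_clinear_def by auto
qed

lemma wpow_Nil[simp]: "wpow A [] = id"
  by (simp add: wpow_def)
lemma wpow_Cons[simp]: "wpow A (i # v) = A i \<circ> wpow A v"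
  by (simp add: wpow_def)
lemma wpow_append: "wpow A (u @ v) = wpow A u \<circ> wpow A v"
  by (induction u) auto

lemma words_Nil[simp]: "[] \<in> words d" by (simp add: words_def)
lemma words_append: "u \<in> words d \<Longrightarrow> v \<in> words d \<Longrightarrow> u @ v \<in> words d"
  by (simp add: words_def)
lemma words_single: "j \<in> {1..d} \<Longrightarrow> [j] \<in> words d"
  by (simp add: words_def)

lemma bounded_clinear_wpow:
  assumes "\<forall>j\<in>{1..d}. bounded_clinear (A j)" and "v \<in> words d"
  shows "bounded_clinear (wpow A v)"
  using assms(2)
proof (induction v)
  case Nil then show ?case using bounded_clinear_id by (simp add: id_def)
next
  case (Cons i v)
  then have i: "i \<in> {1..d}" and v: "v \<in> words d" by (auto simp: words_def)
  have "bounded_clinear (A i)" using assms(1) i by blast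
  moreover have "bounded_clinear (wpow A v)" using Cons.IH v by blast
  ultimately show ?case unfolding wpow_Cons by (rule bounded_clinear_compose)
qed

inductive_set G :: "nat \<Rightarrow> ('x::chilbert_space \<Rightarrow> 'y::chilbert_space) \<Rightarrow> (nat \<Rightarrow> 'x \<Rightarrow> 'x)
   \<Rightarrow> ('xt::chilbert_space \<Rightarrow> 'y) \<Rightarrow> (nat \<Rightarrow> 'xt \<Rightarrow> 'xt) \<Rightarrow> ('x \<times> 'xt) set"
  for d C A Ct At where
  gen: "\<beta> \<in> words d \<Longrightarrow> (cadjoint (wpow A \<beta>) (cadjoint C y), cadjoint (wpow At \<beta>) (cadjoint Ct y)) \<in> G d C A Ct At"
| zero: "(0, 0) \<in> G d C A Ct At"
| add: "(a, b) \<in> G d C A Ct At \<Longrightarrow> (a', b') \<in> G d C A Ct At \<Longrightarrow> (a + a', b + b') \<in> G d C A Ct At"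
| scale: "(a, b) \<in> G d C A Ct At \<Longrightarrow> (scaleC c a, scaleC c b) \<in> G d C A Ct At"

context
  fixes d :: nat
    and C :: "'x::chilbert_space \<Rightarrow> 'y::chilbert_space" and A :: "nat \<Rightarrow> 'x \<Rightarrow> 'x"
    and Ct :: "'xt::chilbert_space \<Rightarrow> 'y" and At :: "nat \<Rightarrow> 'xt \<Rightarrow> 'xt"
  assumes bC: "bounded_clinear C" and bA: "\<forall>j\<in>{1..d}. bounded_clinear (A j)"
    and bCt: "bounded_clinear Ct" and bAt: "\<forall>j\<in>{1..d}. bounded_clinear (At j)"
begin

lemma bCA: "v \<in> words d \<Longrightarrow> bounded_clinear (C \<circ> wpow A v)"
  by (rule bounded_clinear_compose[OF bC bounded_clinear_wpow[OF bA]])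
lemma bCtAt: "v \<in> words d \<Longrightarrow> bounded_clinear (Ct \<circ> wpow At v)"
  by (rule bounded_clinear_compose[OF bCt bounded_clinear_wpow[OF bAt]])

lemma G_output:
  assumes ker: "\<forall>\<alpha>\<in>words d. \<forall>\<beta>\<in>words d. kernel_coeff C A \<alpha> \<beta> = kernel_coeff Ct At \<alpha> \<beta>"
    and ab: "(a, b) \<in> G d C A Ct At" and v: "v \<in> words d"
  shows "C (wpow A v a) = Ct (wpow At v b)"
  using ab
proof (induction rule: G.induct)
  case (gen \<beta> y)
  have "kernel_coeff C A v \<beta> y = kernel_coeff Ct At v \<beta> y" using ker v gen by simp
  then show ?case by (simp add: kernel_coeff_def)
next
  case zero
  show ?case using clinear_zero[OF bounded_clinear_clinear[OF bCA[OF v]]]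
    clinear_zero[OF bounded_clinear_clinear[OF bCtAt[OF v]]] by simp
next
  case (add a b a' b')
  then show ?case using clinear_add[OF bounded_clinear_clinear[OF bCA[OF v]]]
    clinear_add[OF bounded_clinear_clinear[OF bCtAt[OF v]]] by simp
next
  case (scale a b c)
  then show ?case using clinear_scaleC[OF bounded_clinear_clinear[OF bCA[OF v]]]
    clinear_scaleC[OF bounded_clinear_clinear[OF bCtAt[OF v]]] by simp
qed

lemma G_inner_match:
  assumes pq: "(p, q) \<in> G d C A Ct At"
    and st: "\<forall>v\<in>words d. C (wpow A v s) = Ct (wpow At v t)"
  shows "cinner s p = cinner t q"
  using pq
proof (induction rule: G.induct)
  case (gen \<beta> y)
  have "cinner s (cadjoint (wpow A \<beta>) (cadjoint C y)) = cinner (C (wpow A \<beta> s)) y"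
    using cadjoint[OF bounded_clinear_wpow[OF bA gen], of s] cadjoint[OF bC] by simp
  moreover have "cinner t (cadjoint (wpow At \<beta>) (cadjoint Ct y)) = cinner (Ct (wpow At \<beta> t)) y"
    using cadjoint[OF bounded_clinear_wpow[OF bAt gen], of t] cadjoint[OF bCt] by simp
  ultimately show ?case using st gen by simp
next
  case zero then show ?case by simp
next
  case (add a b a' b') then show ?case by (simp add: cinner_add_right)
next
  case (scale a b c) then show ?case by (simp add: cinner_scaleC_right)
qed

lemma G_fst_csubspace: "csubspace (fst ` G d C A Ct At)"
  unfolding csubspace_def
proof (intro conjI ballI allI)
  show "0 \<in> fst ` G d C A Ct At" using G.zero by force
  fix x y assume "x \<in> fst ` G d C A Ct At" "y \<in> fst ` G d C A Ct At"
  then obtain b b' where "(x, b) \<in> G d C A Ct At" "(y, b') \<in> G d C A Ct At" by force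
  then have "(x + y, b + b') \<in> G d C A Ct At" by (rule G.add)
  then show "x + y \<in> fst ` G d C A Ct At" by force
next
  fix c x assume "x \<in> fst ` G d C A Ct At"
  then obtain b where "(x, b) \<in> G d C A Ct At" by force
  then have "(scaleC c x, scaleC c b) \<in> G d C A Ct At" by (rule G.scale)
  then show "scaleC c x \<in> fst ` G d C A Ct At" by force
qed

lemma G_existence:
  assumes ker: "\<forall>\<alpha>\<in>words d. \<forall>\<beta>\<in>words d. kernel_coeff C A \<alpha> \<beta> = kernel_coeff Ct At \<alpha> \<beta>"
    and obs: "observable d C A"
  shows "\<exists>a b xt. (\<forall>n. (a n, b n) \<in> G d C A Ct At) \<and> a \<longlonglongrightarrow> x \<and> b \<longlonglongrightarrow> xt
             \<and> (\<forall>v\<in>words d. C (wpow A v x) = Ct (wpow At v xt))"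
proof -
  define S where "S = fst ` G d C A Ct At"
  have cs: "csubspace (closure S)" unfolding S_def by (intro closure_csubspace G_fst_csubspace)
  obtain m where mS: "m \<in> closure S" and orth: "\<forall>k\<in>closure S. cinner k (x - m) = 0"
    using projection[OF closed_closure cs] by blast
  have "C (wpow A v (x - m)) = 0" if v: "v \<in> words d" for v
  proof -
    define y where "y = C (wpow A v (x - m))"
    have "(cadjoint (wpow A v) (cadjoint C y), cadjoint (wpow At v) (cadjoint Ct y)) \<in> G d C A Ct At"
      by (rule G.gen[OF v])
    then have "cadjoint (wpow A v) (cadjoint C y) \<in> S"
      unfolding S_def by force
    then have "cinner (cadjoint (wpow A v) (cadjoint C y)) (x - m) = 0"
      using orth closure_subset by blast
    moreover have "cinner (cadjoint (wpow A v) (cadjoint C y)) (x - m) = cinner y y"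
      unfolding y_def
      using cadjoint_left[OF bounded_clinear_wpow[OF bA v]] cadjoint_left[OF bC] by simp
    ultimately show ?thesis using cinner_eq_zero_iff y_def by metis
  qed
  then have "x - m = 0" using obs unfolding observable_def by blast
  then have "x \<in> closure S" using mS by simp
  then have "\<exists>a. (\<forall>n. a n \<in> S) \<and> a \<longlonglongrightarrow> x" by (simp only: closure_sequential)
  then obtain a where aS: "\<forall>n. a n \<in> S" and ax: "a \<longlonglongrightarrow> x" by blast
  have "\<forall>n. \<exists>b. (a n, b) \<in> G d C A Ct At" using aS unfolding S_def by force
  then obtain b where ab: "\<forall>n. (a n, b n) \<in> G d C A Ct At" by metis
  have out: "C (wpow A v p) = Ct (wpow At v q)" if "(p, q) \<in> G d C A Ct At" "v \<in> words d" for p q v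
    using G_output[OF ker that] .
  have nrm: "norm (b n - b m) = norm (a n - a m)" for n m
  proof -
    have "(a n + scaleC (-1) (a m), b n + scaleC (-1) (b m)) \<in> G d C A Ct At"
      using ab by (intro G.add G.scale) auto
    then have gnm: "(a n - a m, b n - b m) \<in> G d C A Ct At" by (simp add: scaleC_minus1)
    have "cinner (a n - a m) (a n - a m) = cinner (b n - b m) (b n - b m)"
      using G_inner_match[OF gnm] out[OF gnm] by blast
    then have "(norm (b n - b m))\<^sup>2 = (norm (a n - a m))\<^sup>2" by (simp add: norm_sq_Re)
    then show ?thesis by (simp add: power2_eq_iff_nonneg)
  qed
  have "Cauchy a" using ax by (rule LIMSEQ_imp_Cauchy)
  then have "Cauchy b" unfolding Cauchy_def dist_norm nrm .
  then obtain xt where bx: "b \<longlonglongrightarrow> xt" using Cauchy_convergent convergent_def by blast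
  have "C (wpow A v x) = Ct (wpow At v xt)" if v: "v \<in> words d" for v
  proof -
    have "(\<lambda>n. (C \<circ> wpow A v) (a n)) \<longlonglongrightarrow> (C \<circ> wpow A v) x"
      by (rule bounded_linear.tendsto[OF bounded_clinear_linear[OF bCA[OF v]] ax])
    moreover have "(\<lambda>n. (Ct \<circ> wpow At v) (b n)) \<longlonglongrightarrow> (Ct \<circ> wpow At v) xt"
      by (rule bounded_linear.tendsto[OF bounded_clinear_linear[OF bCtAt[OF v]] bx])
    moreover have "(\<lambda>n. (C \<circ> wpow A v) (a n)) = (\<lambda>n. (Ct \<circ> wpow At v) (b n))"
      using out ab v by auto
    ultimately show ?thesis using LIMSEQ_unique by fastforce
  qed
  then show ?thesis using ab ax bx by blast
qed

end


theorem theorem2p13: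
  fixes d :: nat
    and C :: "'x::chilbert_space \<Rightarrow> 'y::chilbert_space" and A :: "nat \<Rightarrow> 'x \<Rightarrow> 'x"
    and Ct :: "'xt::chilbert_space \<Rightarrow> 'y" and At :: "nat \<Rightarrow> 'xt \<Rightarrow> 'xt"
  assumes "bounded_clinear C" and "\<forall>j\<in>{1..d}. bounded_clinear (A j)"
    and "bounded_clinear Ct" and "\<forall>j\<in>{1..d}. bounded_clinear (At j)"
    and "output_stable d C A" and "observable d C A"
    and "output_stable d Ct At" and "observable d Ct At"
    and "\<forall>\<alpha>\<in>words d. \<forall>\<beta>\<in>words d. kernel_coeff C A \<alpha> \<beta> = kernel_coeff Ct At \<alpha> \<beta>"
  shows "\<exists>U :: 'x \<Rightarrow> 'xt. unitary U \<and> C = Ct \<circ> U \<and> (\<forall>j\<in>{1..d}. A j = inv U \<circ> At j \<circ> U)"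
proof -
  note bC = assms(1) and bA = assms(2) and bCt = assms(3) and bAt = assms(4)
  have ker: "\<forall>\<alpha>\<in>words d. \<forall>\<beta>\<in>words d. kernel_coeff C A \<alpha> \<beta> = kernel_coeff Ct At \<alpha> \<beta>"
    using assms(9) .
  have ker': "\<forall>\<alpha>\<in>words d. \<forall>\<beta>\<in>words d. kernel_coeff Ct At \<alpha> \<beta> = kernel_coeff C A \<alpha> \<beta>"
    using assms(9) by simp
  define P where "P = (\<lambda>x xt. \<forall>v\<in>words d. C (wpow A v x) = Ct (wpow At v xt))"
  have linCA: "clinear (C \<circ> wpow A v)" if "v \<in> words d" for v
    using bounded_clinear_clinear[OF bCA[OF bC bA bCt bAt that]] .
  have linCtAt: "clinear (Ct \<circ> wpow At v)" if "v \<in> words d" for v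
    using bounded_clinear_clinear[OF bCA[OF bCt bAt bC bA that]] .
  have uniq1: "t1 = t2" if "P x t1" "P x t2" for x t1 t2
  proof -
    have "Ct (wpow At v (t1 - t2)) = 0" if v: "v \<in> words d" for v
      using clinear_diff[OF linCtAt[OF v], of t1 t2] \<open>P x t1\<close> \<open>P x t2\<close> v unfolding P_def by simp
    then have "t1 - t2 = 0" using assms(8) unfolding observable_def by blast
    then show ?thesis by simp
  qed
  have uniq2: "s1 = s2" if "P s1 t" "P s2 t" for s1 s2 t
  proof -
    have "C (wpow A v (s1 - s2)) = 0" if v: "v \<in> words d" for v
      using clinear_diff[OF linCA[OF v], of s1 s2] \<open>P s1 t\<close> \<open>P s2 t\<close> v unfolding P_def by simp
    then have "s1 - s2 = 0" using assms(6) unfolding observable_def by blast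
    then show ?thesis by simp
  qed
  have ex1: "\<exists>xt. P x xt" for x
    using G_existence[OF bC bA bCt bAt ker assms(6), of x] unfolding P_def by blast
  have ex2: "\<exists>a b x. (\<forall>n. (b n, a n) \<in> G d Ct At C A) \<and> b \<longlonglongrightarrow> xt \<and> a \<longlonglongrightarrow> x \<and> P x xt" for xt
    using G_existence[OF bCt bAt bC bA ker' assms(8), of xt] unfolding P_def by metis
  define U where "U = (\<lambda>x. THE xt. P x xt)"
  define V where "V = (\<lambda>xt. THE x. P x xt)"
  have PU: "P x (U x)" for x
    unfolding U_def using ex1[of x] uniq1 by (metis theI)
  have PV: "P (V xt) xt" for xt
  proof -
    obtain x where "P x xt" using ex2[of xt] by blast
    then show ?thesis unfolding V_def using uniq2 by (metis theI)
  qed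
  have UV: "U (V xt) = xt" for xt using uniq1[OF PU PV] .
  have VU: "V (U x) = x" for x using uniq2[OF PV PU] .
  have bij: "bij U" by (rule o_bij[of V]) (auto simp: fun_eq_iff UV VU)
  have inner1: "cinner (U x) xt = cinner x (V xt)" for x xt
  proof -
    obtain a b x' where ab: "\<forall>n. (b n, a n) \<in> G d Ct At C A" and bx: "b \<longlonglongrightarrow> xt"
      and ax: "a \<longlonglongrightarrow> x'" and Px': "P x' xt" using ex2[of xt] by blast
    have Vx: "V xt = x'" using uniq2[OF PV Px'] .
    have m: "\<forall>v\<in>words d. Ct (wpow At v (U x)) = C (wpow A v x)" using PU[of x] unfolding P_def by simp
    have eq: "cinner (U x) (b n) = cinner x (a n)" for n
      using G_inner_match[OF bCt bAt bC bA ab[rule_format, of n] m] .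
    have "(\<lambda>n. cinner (U x) (b n)) \<longlonglongrightarrow> cinner (U x) xt"
      by (rule bounded_linear.tendsto[OF bounded_linear_cinner_right bx])
    moreover have "(\<lambda>n. cinner x (a n)) \<longlonglongrightarrow> cinner x x'"
      by (rule bounded_linear.tendsto[OF bounded_linear_cinner_right ax])
    ultimately show ?thesis using eq Vx LIMSEQ_unique by fastforce
  qed
  have inner: "cinner (U x) (U y) = cinner x y" for x y using inner1[of x "U y"] VU by simp
  have Uadd: "U (x + y) = U x + U y" for x y
  proof -
    have "P (x + y) (U x + U y)" unfolding P_def
    proof
      fix v assume v: "v \<in> words d"
      show "C (wpow A v (x + y)) = Ct (wpow At v (U x + U y))"
        using clinear_add[OF linCA[OF v], of x y] clinear_add[OF linCtAt[OF v], of "U x" "U y"]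
          PU[of x] PU[of y] v unfolding P_def by simp
    qed
    then show ?thesis using uniq1 PU by blast
  qed
  have Usc: "U (scaleC c x) = scaleC c (U x)" for c x
  proof -
    have "P (scaleC c x) (scaleC c (U x))" unfolding P_def
    proof
      fix v assume v: "v \<in> words d"
      show "C (wpow A v (scaleC c x)) = Ct (wpow At v (scaleC c (U x)))"
        using clinear_scaleC[OF linCA[OF v], of c x] clinear_scaleC[OF linCtAt[OF v], of c "U x"]
          PU[of x] v unfolding P_def by simp
    qed
    then show ?thesis using uniq1 PU by blast
  qed
  have nU: "norm (U x) = norm x" for x using inner[of x x] by (simp add: norm_eq_sqrt_cinner)
  have "bounded_clinear U" unfolding bounded_clinear_def clinear_def
    using Uadd Usc nU by (intro conjI exI[of _ 1]) auto
  then have unit: "unitary U" unfolding unitary_def using bij inner by blast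
  have CU: "C = Ct \<circ> U"
  proof
    fix x show "C x = (Ct \<circ> U) x" using PU[of x] words_Nil unfolding P_def by fastforce
  qed
  have AU: "A j = inv U \<circ> At j \<circ> U" if j: "j \<in> {1..d}" for j
  proof
    fix x
    have "P (A j x) (At j (U x))" unfolding P_def
    proof
      fix v assume v: "v \<in> words d"
      have vj: "v @ [j] \<in> words d" using words_append[OF v words_single[OF j]] .
      show "C (wpow A v (A j x)) = Ct (wpow At v (At j (U x)))"
      proof -
        have "C (wpow A (v @ [j]) x) = Ct (wpow At (v @ [j]) (U x))"
          using PU[of x] vj unfolding P_def by blast
        then show ?thesis by (simp add: wpow_append)
      qed
    qed
    then have "U (A j x) = At j (U x)" using uniq1 PU by blast
    then show "A j x = (inv U \<circ> At j \<circ> U) x"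
      using bij_is_inj[OF bij] by (metis comp_apply inv_f_f)
  qed
  show ?thesis using unit CU AU by blast
qed

end
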